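(* For every $k \geq 2$ and every $m$ with $k \le m \le 2k-2$, the number of Grassmannian permutations of $[m]$ that avoid $\operatorname{id}_k = 12\cdots k$ equals \[ \sum_{j=1}^{2k-m} (-1)^{j-1}\, j \binom{2k-m-j}{j} C_{k-j}, \] where $C_n = \frac{1}{n+1}\binom{2n}{n}$ is the $n$-th Catalan number (and $\binom{a}{b}=0$ when $b>a\ge 0$).
   Context: A permutation of $[m]$ is Grassmannian if it has at most one descent (one-line notation). A permutation $\sigma$ contains a pattern $\pi$ of size $k$ if some subsequence of $\sigma$ of length $k$ is order-isomorphic to $\pi$; otherwise $\sigma$ avoids $\pi$. *)

theory Defs
  imports Main "HOL-Library.Sublist" "HOL-Combinatorics.Multiset_Permutations"
begin

text \<open>Permutations of [m] in one-line notation are lists in permutations_of_set {1..m}.\<close>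

definition descents :: "nat list \<Rightarrow> nat set" where
  "descents xs = {i. Suc i < length xs \<and> xs ! i > xs ! Suc i}"

definition grassmannian :: "nat list \<Rightarrow> bool" where
  "grassmannian xs \<longleftrightarrow> card (descents xs) \<le> 1"

definition order_iso :: "nat list \<Rightarrow> nat list \<Rightarrow> bool" where
  "order_iso xs ys \<longleftrightarrow> length xs = length ys \<and>
     (\<forall>i < length xs. \<forall>j < length xs. xs ! i < xs ! j \<longleftrightarrow> ys ! i < ys ! j)"

definition contains_pattern :: "nat list \<Rightarrow> nat list \<Rightarrow> bool" where
  "contains_pattern \<sigma> \<pi> \<longleftrightarrow> (\<exists>\<tau>. subseq \<tau> \<sigma> \<and> order_iso \<tau> \<pi>)"

definition avoids :: "nat list \<Rightarrow> nat list \<Rightarrow> bool" where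
  "avoids \<sigma> \<pi> \<longleftrightarrow> \<not> contains_pattern \<sigma> \<pi>"

definition id_perm :: "nat \<Rightarrow> nat list" where
  "id_perm k = [1..<k+1]"

definition catalan :: "nat \<Rightarrow> nat" where
  "catalan n = ((2*n) choose n) div (n+1)"

end

theory Submission
  imports Defs
begin


definition Aa :: "nat \<Rightarrow> nat \<Rightarrow> int" where
  "Aa k n = (\<Sum>j\<le>n. (-1)^j * int ((n-j) choose j) * int (catalan (k-j)))"
definition Gg :: "nat \<Rightarrow> nat \<Rightarrow> int" where
  "Gg k n = (\<Sum>j\<le>n. (-1)^(Suc j) * int j * int ((n-j) choose j) * int (catalan (k-j)))"

lemma ch_aux: "i \<le> n \<Longrightarrow> (Suc (Suc n) - Suc i) choose Suc i = ((n-i) choose i) + ((n-i) choose Suc i)"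
  by (simp add: Suc_diff_le)

lemma Aa_rec: "Aa k (Suc (Suc n)) = Aa k (Suc n) - Aa (k-1) n"
proof -
  have e1: "Aa k (Suc (Suc n)) = int (catalan k) +
     (\<Sum>i\<le>n. (-1)^(Suc i) * int (((n-i) choose i) + ((n-i) choose Suc i)) * int (catalan (k - Suc i)))"
  proof -
    have "Aa k (Suc (Suc n)) = int (catalan k) + (\<Sum>i\<le>Suc n. (-1)^(Suc i) * int ((Suc (Suc n) - Suc i) choose Suc i) * int (catalan (k - Suc i)))"
      unfolding Aa_def by (subst sum.atMost_Suc_shift) simp
    also have "\<dots> = int (catalan k) + (\<Sum>i\<le>n. (-1)^(Suc i) * int ((Suc (Suc n) - Suc i) choose Suc i) * int (catalan (k - Suc i)))"
      by (subst sum.atMost_Suc) simp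
    also have "\<dots> = int (catalan k) +
     (\<Sum>i\<le>n. (-1)^(Suc i) * int (((n-i) choose i) + ((n-i) choose Suc i)) * int (catalan (k - Suc i)))"
      by (intro arg_cong2[where f="(+)"] refl sum.cong) (simp_all only: ch_aux atMost_iff)
    finally show ?thesis .
  qed
  have e2: "Aa k (Suc n) = int (catalan k) +
     (\<Sum>i\<le>n. (-1)^(Suc i) * int ((n-i) choose Suc i) * int (catalan (k - Suc i)))"
    unfolding Aa_def by (subst sum.atMost_Suc_shift) simp
  have e3: "Aa (k-1) n = (\<Sum>i\<le>n. (-1)^i * int ((n-i) choose i) * int (catalan (k - Suc i)))"
    unfolding Aa_def by simp
  have "(\<Sum>i\<le>n. (-1)^(Suc i) * int (((n-i) choose i) + ((n-i) choose Suc i)) * int (catalan (k - Suc i)))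
     = (\<Sum>i\<le>n. (-1)^(Suc i) * int ((n-i) choose Suc i) * int (catalan (k - Suc i)))
      - (\<Sum>i\<le>n. (-1)^i * int ((n-i) choose i) * int (catalan (k - Suc i)))"
    unfolding sum_subtractf[symmetric] by (intro sum.cong refl) (simp add: algebra_simps)
  then show ?thesis unfolding e1 e2 e3 by simp
qed

lemma Gg_rec: "Gg k (Suc (Suc n)) = Gg k (Suc n) - Gg (k-1) n + Aa (k-1) n"
proof -
  have e1: "Gg k (Suc (Suc n)) =
     (\<Sum>i\<le>n. (-1)^i * int (Suc i) * int (((n-i) choose i) + ((n-i) choose Suc i)) * int (catalan (k - Suc i)))"
  proof -
    have "Gg k (Suc (Suc n)) = (\<Sum>i\<le>Suc n. (-1)^i * int (Suc i) * int ((Suc (Suc n) - Suc i) choose Suc i) * int (catalan (k - Suc i)))"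
      unfolding Gg_def by (subst sum.atMost_Suc_shift) simp
    also have "\<dots> = (\<Sum>i\<le>n. (-1)^i * int (Suc i) * int ((Suc (Suc n) - Suc i) choose Suc i) * int (catalan (k - Suc i)))"
      by (subst sum.atMost_Suc) simp
    also have "\<dots> = (\<Sum>i\<le>n. (-1)^i * int (Suc i) * int (((n-i) choose i) + ((n-i) choose Suc i)) * int (catalan (k - Suc i)))"
      by (intro sum.cong refl) (simp_all only: ch_aux atMost_iff)
    finally show ?thesis .
  qed
  have e2: "Gg k (Suc n) =
     (\<Sum>i\<le>n. (-1)^i * int (Suc i) * int ((n-i) choose Suc i) * int (catalan (k - Suc i)))"
    unfolding Gg_def by (subst sum.atMost_Suc_shift) simp
  have e3: "Gg (k-1) n = (\<Sum>i\<le>n. (-1)^(Suc i) * int i * int ((n-i) choose i) * int (catalan (k - Suc i)))"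
    unfolding Gg_def by simp
  have e4: "Aa (k-1) n = (\<Sum>i\<le>n. (-1)^i * int ((n-i) choose i) * int (catalan (k - Suc i)))"
    unfolding Aa_def by simp
  have "(\<Sum>i\<le>n. (-1)^i * int (Suc i) * int (((n-i) choose i) + ((n-i) choose Suc i)) * int (catalan (k - Suc i)))
     = (\<Sum>i\<le>n. (-1)^i * int (Suc i) * int ((n-i) choose Suc i) * int (catalan (k - Suc i)))
      - (\<Sum>i\<le>n. (-1)^(Suc i) * int i * int ((n-i) choose i) * int (catalan (k - Suc i)))
      + (\<Sum>i\<le>n. (-1)^i * int ((n-i) choose i) * int (catalan (k - Suc i)))"
    unfolding sum_subtractf[symmetric] sum.distrib[symmetric] by (intro sum.cong refl) (simp add: algebra_simps)
  then show ?thesis unfolding e1 e2 e3 e4 by simp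
qed



definition Bb :: "nat \<Rightarrow> nat \<Rightarrow> int" where
  "Bb k n = int ((2*k-n) choose k) - int ((2*k-n) choose Suc k)"

definition Pp :: "nat \<Rightarrow> nat \<Rightarrow> int" where
  "Pp M r = (\<Sum>a<r. int (M choose a))"

definition Ll :: "nat \<Rightarrow> nat \<Rightarrow> int" where
  "Ll k n = Pp (2*k-n) k - Pp (2*k-n) (k-n+1) - int (n-1) * int ((2*k-n) choose k)"

lemma Pp_Suc: "Pp M (Suc r) = Pp M r + int (M choose r)"
  by (simp add: Pp_def)

lemma Pp_Suc_Suc: "Pp (Suc M) (Suc r) = Pp M (Suc r) + Pp M r"
proof (induction r)
  case 0 then show ?case by (simp add: Pp_def)
next
  case (Suc r)
  show ?case using Suc by (simp add: Pp_Suc)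
qed

lemma catalan_eq: "int (catalan k) = int ((2*k) choose k) - int ((2*k) choose Suc k)"
proof (cases k)
  case 0 then show ?thesis by (simp add: catalan_def)
next
  case (Suc k1)
  have h: "Suc k * ((2*k) choose Suc k) = k * ((2*k) choose k)"
    using Suc_times_binomial_add[of k k1] Suc by (simp add: mult_2)
  define x where "x = (2*k) choose k"
  define y where "y = (2*k) choose Suc k"
  have h': "Suc k * y = k * x" using h x_def y_def by simp
  have le: "y \<le> x"
  proof -
    have "Suc k * y \<le> Suc k * x" using h' by simp
    then show ?thesis using Suc_mult_le_cancel1 by blast
  qed
  have "x = Suc k * (x - y)" using h' le by (simp add: algebra_simps diff_mult_distrib2)
  then have "x div Suc k = x - y" by (metis nonzero_mult_div_cancel_left Zero_not_Suc)
  then show ?thesis unfolding catalan_def x_def[symmetric] y_def[symmetric] using le by simp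
qed

lemma Aa_0: "Aa k 0 = int (catalan k)" by (simp add: Aa_def)
lemma Aa_1: "Aa k (Suc 0) = int (catalan k)" by (simp add: Aa_def)
lemma Gg_1: "Gg k (Suc 0) = 0" by (simp add: Gg_def)
lemma Gg_2: "Gg k 2 = int (catalan (k-1))"
  by (simp add: Gg_def numeral_2_eq_2)

lemma Bb_1: "1 \<le> k \<Longrightarrow> Bb k (Suc 0) = int (catalan k)"
proof -
  assume "1 \<le> k"
  then obtain k1 where k: "k = Suc k1" by (cases k) auto
  have s: "Suc (2*k1) choose k1 = Suc (2*k1) choose Suc k1"
    using binomial_symmetric[of k1 "Suc (2*k1)"] by (simp add: Suc_diff_le)
  show ?thesis unfolding catalan_eq Bb_def k
    by (simp add: s)
qed

lemma bb_step: "1 \<le> k \<Longrightarrow> int (Suc M choose k) - int (Suc M choose Suc k) - (int (M choose (k-1)) - int (M choose Suc (k-1)))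
   = int (M choose k) - int (M choose Suc k)"
  by (cases k) simp_all

lemma ll_step: "1 \<le> k \<Longrightarrow>
  Pp (Suc M) k - Pp (Suc M) (Suc R) - int (Suc n3) * int (Suc M choose k)
  - (Pp M (k-1) - Pp M (Suc R) - int n3 * int (M choose (k-1)))
  + (int (M choose (k-1)) - int (M choose Suc (k-1)))
  = Pp M k - Pp M R - int (Suc (Suc n3)) * int (M choose k)"
proof (cases k)
  case (Suc K)
  have p1: "Pp (Suc M) (Suc K) = Pp M (Suc K) + Pp M K" by (rule Pp_Suc_Suc)
  have p2: "Pp (Suc M) (Suc R) = Pp M (Suc R) + Pp M R" by (rule Pp_Suc_Suc)
  show ?thesis unfolding Suc p1 p2 by (simp add: Pp_Suc algebra_simps)
qed simp

lemma Aa_closed: "n \<le> k \<Longrightarrow> Aa k n = Bb k n"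
proof (induction n arbitrary: k rule: less_induct)
  case (less n)
  show ?case
  proof (cases n)
    case 0 then show ?thesis by (simp add: Aa_0 catalan_eq Bb_def)
  next
    case (Suc n1)
    show ?thesis
    proof (cases n1)
      case 0 then show ?thesis using Suc less.prems by (simp add: Aa_1 Bb_1)
    next
      case (Suc n2)
      have nn: "n = Suc (Suc n2)" using \<open>n = Suc n1\<close> Suc by simp
      have "Aa k n = Aa k (Suc n2) - Aa (k-1) n2" using nn Aa_rec by simp
      also have "\<dots> = Bb k (Suc n2) - Bb (k-1) n2"
      proof -
        have "Aa k (Suc n2) = Bb k (Suc n2)" by (rule less.IH) (use nn less.prems in auto)
        moreover have "Aa (k-1) n2 = Bb (k-1) n2" by (rule less.IH) (use nn less.prems in auto)
        ultimately show ?thesis by (simp only:)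
      qed
      also have "\<dots> = Bb k n"
      proof -
        obtain r where k: "k = n2 + r + 2" using less.prems nn
          by (intro that[of "k - (n2 + 2)"]) auto
        define M where "M = n2 + 2*r + 2"
        have e: "2*k - Suc n2 = Suc M" "2*(k-1) - n2 = M" "2*k - Suc (Suc n2) = M"
          unfolding k M_def by simp_all
        have kpos: "1 \<le> k" using k by simp
        show ?thesis unfolding Bb_def nn e using bb_step[OF kpos, of M] by simp
      qed
      finally show ?thesis .
    qed
  qed
qed

lemma Gg_closed: "1 \<le> n \<Longrightarrow> n \<le> k \<Longrightarrow> Gg k n = Ll k n"
proof (induction n arbitrary: k rule: less_induct)
  case (less n)
  show ?case
  proof (cases n)
    case 0 then show ?thesis using less.prems by simp
  next
    case (Suc n1)
    show ?thesis
    proof (cases n1)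
      case 0 then show ?thesis using Suc less.prems by (simp add: Gg_1 Ll_def)
    next
      case (Suc n2)
      have nn: "n = Suc (Suc n2)" using \<open>n = Suc n1\<close> Suc by simp
      show ?thesis
      proof (cases n2)
        case 0
        obtain r where k: "k = r + 2" using less.prems nn 0
          by (intro that[of "k - 2"]) auto
        define K1 where "K1 = r + 1"
        define M where "M = 2 * K1"
        have "Gg k n = int (catalan K1)" using nn 0 k Gg_2 K1_def by (simp add: numeral_2_eq_2)
        also have "\<dots> = int (M choose K1) - int (M choose Suc K1)"
          unfolding M_def by (rule catalan_eq)
        also have "\<dots> = Ll k n"
        proof -
          have "2*k - n = M" "k - n + 1 = K1" "n - 1 = 1" "k = Suc K1"
            unfolding k M_def K1_def nn 0 by simp_all
          then show ?thesis unfolding Ll_def by (simp add: Pp_Suc)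
        qed
        finally show ?thesis .
      next
        case (Suc n3)
        have "Gg k n = Gg k (Suc n2) - Gg (k-1) n2 + Aa (k-1) n2" using nn Gg_rec by simp
        also have "\<dots> = Ll k (Suc n2) - Ll (k-1) n2 + Bb (k-1) n2"
        proof -
          have "Gg k (Suc n2) = Ll k (Suc n2)" by (rule less.IH) (use nn less.prems in auto)
          moreover have "Gg (k-1) n2 = Ll (k-1) n2" by (rule less.IH) (use nn less.prems Suc in auto)
          moreover have "Aa (k-1) n2 = Bb (k-1) n2" by (rule Aa_closed) (use nn less.prems in auto)
          ultimately show ?thesis by (simp only:)
        qed
        also have "\<dots> = Ll k n"
        proof -
          obtain r where k: "k = n2 + r + 2" using less.prems nn
            by (intro that[of "k - (n2 + 2)"]) auto
          obtain n3 where n3: "n2 = Suc n3" using Suc by blast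
          define M where "M = n2 + 2*r + 2"
          define R where "R = r + 1"
          have f: "2*k - Suc n2 = Suc M" "k - Suc n2 + 1 = Suc R" "Suc n2 - 1 = n2" "2*(k-1) - n2 = M"
            "k - 1 - n2 + 1 = Suc R" "n2 - 1 = n3" "2*k - Suc (Suc n2) = M" "k - Suc (Suc n2) + 1 = R"
            "Suc (Suc n2) - 1 = Suc n2"
            by (simp_all add: k M_def R_def n3)
          have kpos: "1 \<le> k" using k by simp
          show ?thesis unfolding Ll_def Bb_def nn f unfolding n3 using ll_step[OF kpos, of M R n3] by simp
        qed
        finally show ?thesis .
      qed
    qed
  qed
qed



definition condK :: "nat \<Rightarrow> nat \<Rightarrow> nat set \<Rightarrow> bool" where
  "condK m K S \<longleftrightarrow> (\<forall>t\<le>m. card {x\<in>S. x \<le> t} + card ({t<..m} - S) \<le> K)"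

definition Dy :: "nat \<Rightarrow> nat \<Rightarrow> nat \<Rightarrow> nat" where
  "Dy m K a = card {S. S \<subseteq> {1..m} \<and> condK m K S \<and> card S = a}"

definition phi :: "nat \<Rightarrow> nat \<Rightarrow> nat \<Rightarrow> int" where
  "phi m K a = (if a \<le> K \<and> m < K + 1 + a then int (m choose a) - int (m choose Suc K) else 0)"

lemma condK_notin:
  assumes S: "S \<subseteq> {1..m}"
  shows "condK (Suc m) K S \<longleftrightarrow> 1 \<le> K \<and> condK m (K-1) S"
proof -
  have fin: "finite S" using S finite_subset by blast
  have a: "{x\<in>S. x \<le> t} = {x\<in>S. x \<le> m}" if "t \<ge> m" for t using S that by auto
  have b: "t \<le> m \<Longrightarrow> {t<..Suc m} - S = insert (Suc m) ({t<..m} - S)" for t using S by auto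
  have c: "card ({t<..Suc m} - S) = Suc (card ({t<..m} - S))" if "t \<le> m" for t
    unfolding b[OF that] by (subst card_insert_disjoint) auto
  have d: "{x\<in>S. x \<le> m} = S" using S by auto
  show ?thesis
  proof
    assume h: "condK (Suc m) K S"
    have K1: "1 \<le> K" using h[unfolded condK_def, rule_format, of 0] c[of 0] by simp
    moreover have "condK m (K-1) S" unfolding condK_def
    proof (intro allI impI)
      fix t assume "t \<le> m"
      then show "card {x \<in> S. x \<le> t} + card ({t<..m} - S) \<le> K - 1"
        using h[unfolded condK_def, rule_format, of t] c[of t] by simp
    qed
    ultimately show "1 \<le> K \<and> condK m (K-1) S" by simp
  next
    assume h: "1 \<le> K \<and> condK m (K-1) S"
    show "condK (Suc m) K S" unfolding condK_def
    proof (intro allI impI)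
      fix t assume t: "t \<le> Suc m"
      show "card {x \<in> S. x \<le> t} + card ({t<..Suc m} - S) \<le> K"
      proof (cases "t \<le> m")
        case True
        then show ?thesis using h[THEN conjunct2, unfolded condK_def, rule_format, of t] c[of t] h by (simp, linarith)
      next
        case False
        then have "t = Suc m" using t by simp
        moreover have "card S \<le> K - 1"
          using h[THEN conjunct2, unfolded condK_def, rule_format, of m] d by simp
        ultimately show ?thesis using a[of t] d by simp
      qed
    qed
  qed
qed

lemma condK_in:
  assumes S: "S \<subseteq> {1..m}"
  shows "condK (Suc m) K (insert (Suc m) S) \<longleftrightarrow> condK m K S \<and> card S + 1 \<le> K"
proof -
  have fin: "finite S" using S finite_subset by blast
  have nin: "Suc m \<notin> S" using S by auto
  have a: "t \<le> m \<Longrightarrow> {x\<in>insert (Suc m) S. x \<le> t} = {x\<in>S. x \<le> t}" for t by auto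
  have b: "t \<le> m \<Longrightarrow> {t<..Suc m} - insert (Suc m) S = {t<..m} - S" for t by auto
  have d: "{x\<in>insert (Suc m) S. x \<le> Suc m} = insert (Suc m) S" using S by auto
  have d2: "{x\<in>S. x \<le> m} = S" using S by auto
  have e: "card (insert (Suc m) S) = Suc (card S)" using fin nin by simp
  show ?thesis
  proof
    assume h: "condK (Suc m) K (insert (Suc m) S)"
    have "condK m K S" unfolding condK_def
    proof (intro allI impI)
      fix t assume "t \<le> m"
      then show "card {x \<in> S. x \<le> t} + card ({t<..m} - S) \<le> K"
        using h[unfolded condK_def, rule_format, of t] a[of t] b[of t] by simp
    qed
    moreover have "card S + 1 \<le> K"
      using h[unfolded condK_def, rule_format, of "Suc m"] d e by simp
    ultimately show "condK m K S \<and> card S + 1 \<le> K" by simp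
  next
    assume h: "condK m K S \<and> card S + 1 \<le> K"
    show "condK (Suc m) K (insert (Suc m) S)" unfolding condK_def
    proof (intro allI impI)
      fix t assume t: "t \<le> Suc m"
      show "card {x \<in> insert (Suc m) S. x \<le> t} + card ({t<..Suc m} - insert (Suc m) S) \<le> K"
      proof (cases "t \<le> m")
        case True
        then show ?thesis using h[THEN conjunct1, unfolded condK_def, rule_format, of t] a[of t] b[of t] by simp
      next
        case False
        then have "t = Suc m" using t by simp
        then show ?thesis using d e h by simp
      qed
    qed
  qed
qed

lemma Dy_0: "Dy 0 K a = (if a = 0 then 1 else 0)"
proof -
  have "{S. S \<subseteq> {1..0::nat} \<and> condK 0 K S \<and> card S = a} = (if a = 0 then {{}} else {})"
    by (auto simp: condK_def)
  then show ?thesis unfolding Dy_def by simp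
qed

lemma Dy_Suc: "Dy (Suc m) K a = (if 1 \<le> K then Dy m (K-1) a else 0) + (if 1 \<le> a \<and> a \<le> K then Dy m K (a-1) else 0)"
proof -
  define A0 where "A0 = {S. S \<subseteq> {1..m} \<and> condK m (K-1) S \<and> card S = a \<and> 1 \<le> K}"
  define A1 where "A1 = {S. S \<subseteq> {1..m} \<and> condK m K S \<and> card S = a - 1 \<and> 1 \<le> a \<and> a \<le> K}"
  have split: "{S. S \<subseteq> {1..Suc m} \<and> condK (Suc m) K S \<and> card S = a} = A0 \<union> insert (Suc m) ` A1"
  proof (intro equalityI subsetI)
    fix S assume "S \<in> {S. S \<subseteq> {1..Suc m} \<and> condK (Suc m) K S \<and> card S = a}"
    then have S: "S \<subseteq> {1..Suc m}" "condK (Suc m) K S" "card S = a" by auto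
    show "S \<in> A0 \<union> insert (Suc m) ` A1"
    proof (cases "Suc m \<in> S")
      case False
      then have "S \<subseteq> {1..m}" using S(1) by (auto simp: le_Suc_eq)
      then show ?thesis using S condK_notin[of S m K] unfolding A0_def by auto
    next
      case True
      define S' where "S' = S - {Suc m}"
      have S'm: "S' \<subseteq> {1..m}" using S(1) unfolding S'_def by (auto simp: le_Suc_eq)
      have SS: "S = insert (Suc m) S'" using True unfolding S'_def by auto
      have fin: "finite S'" using S'm finite_subset by blast
      have "Suc m \<notin> S'" using S'm by auto
      then have cS: "card S = Suc (card S')" unfolding SS using fin by simp
      have "condK m K S' \<and> card S' + 1 \<le> K" using condK_in[OF S'm, of K] S(2) SS by simp
      then have "S' \<in> A1" unfolding A1_def using S'm cS S(3) by auto
      then show ?thesis using SS by blast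
    qed
  next
    fix S assume "S \<in> A0 \<union> insert (Suc m) ` A1"
    then show "S \<in> {S. S \<subseteq> {1..Suc m} \<and> condK (Suc m) K S \<and> card S = a}"
    proof
      assume "S \<in> A0"
      then show ?thesis unfolding A0_def using condK_notin[of S m K] by auto
    next
      assume "S \<in> insert (Suc m) ` A1"
      then obtain S' where S': "S' \<in> A1" "S = insert (Suc m) S'" by blast
      have S'm: "S' \<subseteq> {1..m}" using S' unfolding A1_def by auto
      have fin: "finite S'" using S'm finite_subset by blast
      have "Suc m \<notin> S'" using S'm by auto
      then have cS: "card S = Suc (card S')" unfolding S'(2) using fin by simp
      have "condK (Suc m) K S" unfolding S'(2) using condK_in[OF S'm, of K] S'(1) unfolding A1_def by auto
      then show ?thesis using S'm cS S'(1) unfolding A1_def S'(2) by auto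
    qed
  qed
  have disj: "A0 \<inter> insert (Suc m) ` A1 = {}" unfolding A0_def by auto
  have finA0: "finite A0" unfolding A0_def by (rule finite_subset[of _ "Pow {1..m}"]) auto
  have finA1: "finite A1" unfolding A1_def by (rule finite_subset[of _ "Pow {1..m}"]) auto
  have inj: "inj_on (insert (Suc m)) A1"
  proof (rule inj_onI)
    fix X Y assume "X \<in> A1" "Y \<in> A1" "insert (Suc m) X = insert (Suc m) Y"
    then have "Suc m \<notin> X" "Suc m \<notin> Y" unfolding A1_def by auto
    with \<open>insert (Suc m) X = insert (Suc m) Y\<close> show "X = Y" by (metis insert_ident)
  qed
  have "Dy (Suc m) K a = card A0 + card A1"
    unfolding Dy_def split using card_Un_disjoint[OF finA0 finite_imageI[OF finA1] disj] card_image[OF inj] by simp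
  moreover have "card A0 = (if 1 \<le> K then Dy m (K-1) a else 0)"
    unfolding A0_def Dy_def by auto
  moreover have "card A1 = (if 1 \<le> a \<and> a \<le> K then Dy m K (a-1) else 0)"
    unfolding A1_def Dy_def by auto
  ultimately show ?thesis by simp
qed

lemma Dy_closed: "int (Dy m K a) = phi m K a"
proof (induction m arbitrary: K a)
  case 0
  show ?case unfolding Dy_0 phi_def by auto
next
  case (Suc m)
  have IH1: "int (Dy m (K-1) a) = phi m (K-1) a" by (rule Suc.IH)
  have IH2: "int (Dy m K (a-1)) = phi m K (a-1)" by (rule Suc.IH)
  have "int (Dy (Suc m) K a) = (if 1 \<le> K then phi m (K-1) a else 0) + (if 1 \<le> a \<and> a \<le> K then phi m K (a-1) else 0)"
    unfolding Dy_Suc IH1[symmetric] IH2[symmetric] by simp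
  also have "\<dots> = phi (Suc m) K a"
  proof (cases K)
    case 0 then show ?thesis by (simp add: phi_def)
  next
    case (Suc K1)
    show ?thesis
    proof (cases a)
      case 0 then show ?thesis unfolding Suc by (simp add: phi_def)
    next
      case (Suc a1)
      show ?thesis unfolding \<open>K = Suc K1\<close> Suc by (cases "a1 = K1") (simp_all add: phi_def)
    qed
  qed
  finally show ?case .
qed



lemma count_sum: "card {S. S \<subseteq> {1..m} \<and> condK m K S} = (\<Sum>a\<le>m. Dy m K a)"
proof -
  have eq: "{S. S \<subseteq> {1..m} \<and> condK m K S} = (\<Union>a\<in>{..m}. {S. S \<subseteq> {1..m} \<and> condK m K S \<and> card S = a})"
  proof (intro equalityI subsetI)
    fix S assume "S \<in> {S. S \<subseteq> {1..m} \<and> condK m K S}"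
    then have "S \<subseteq> {1..m}" "condK m K S" by auto
    moreover have "card S \<le> m" using card_mono[OF _ \<open>S \<subseteq> {1..m}\<close>] by simp
    ultimately show "S \<in> (\<Union>a\<in>{..m}. {S. S \<subseteq> {1..m} \<and> condK m K S \<and> card S = a})" by auto
  qed auto
  show ?thesis unfolding eq Dy_def
    by (rule card_UN_disjoint) (auto intro: finite_subset[of _ "Pow {1..m}"])
qed

lemma sum_window: fixes N lo hi :: nat and h :: "nat \<Rightarrow> int" shows "lo \<le> hi \<Longrightarrow> (\<Sum>a<N. if lo \<le> a \<and> a < hi then h a else 0) = (\<Sum>a<min N hi. h a) - (\<Sum>a<min N lo. (h a :: int))"
proof (induction N)
  case 0 then show ?case by simp
next
  case (Suc N)
  show ?case
  proof (cases "N < lo")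
    case True
    then have "min (Suc N) hi = Suc N" "min (Suc N) lo = Suc N" "min N hi = N" "min N lo = N" using Suc.prems by auto
    then show ?thesis using Suc True by simp
  next
    case False
    show ?thesis
    proof (cases "N < hi")
      case True
      then have "min (Suc N) hi = Suc N" "min (Suc N) lo = lo" "min N hi = N" "min N lo = lo" using False by auto
      then show ?thesis using Suc True False by simp
    next
      case F2: False
      then have "min (Suc N) hi = hi" "min (Suc N) lo = lo" "min N hi = hi" "min N lo = lo" using False by auto
      then show ?thesis using Suc F2 False by simp
    qed
  qed
qed

lemma sum_const_sub: "(\<Sum>a<r. int (m choose a) - c) = Pp m r - int r * c"
  unfolding Pp_def by (simp add: sum_subtractf)

lemma sum_phi:
  assumes "2 \<le> n" "n \<le> k" "m = 2*k - n"
  shows "(\<Sum>a\<le>m. phi m (k-1) a) = Ll k n"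
proof -
  define lo where "lo = k - n + 1"
  define c where "c = int (m choose k)"
  have k1: "Suc (k-1) = k" using assms by simp
  have ph: "phi m (k-1) a = (if lo \<le> a \<and> a < k then int (m choose a) - c else 0)" for a
    unfolding phi_def lo_def c_def k1 using assms by auto
  have "(\<Sum>a\<le>m. phi m (k-1) a) = (\<Sum>a<Suc m. phi m (k-1) a)"
    by (simp add: lessThan_Suc_atMost)
  also have "\<dots> = (\<Sum>a<min (Suc m) k. int (m choose a) - c) - (\<Sum>a<min (Suc m) lo. int (m choose a) - c)"
    unfolding ph by (rule sum_window) (use assms lo_def in simp)
  also have "min (Suc m) k = k" using assms by simp
  also have "min (Suc m) lo = lo" using assms unfolding lo_def by simp
  also have "(\<Sum>a<k. int (m choose a) - c) - (\<Sum>a<lo. int (m choose a) - c) = Pp m k - Pp m lo - (int k - int lo) * c"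
    unfolding sum_const_sub by (simp add: algebra_simps)
  also have "\<dots> = Ll k n"
  proof -
    have "int k - int lo = int (n - 1)" unfolding lo_def using assms by simp
    then show ?thesis unfolding Ll_def lo_def c_def assms(3) by simp
  qed
  finally show ?thesis .
qed

lemma rhs_eq:
  "(\<Sum>j = 1..n. (-1)^(j-1) * int j * int ((n - j) choose j) * int (catalan (k - j))) = Gg k n"
proof -
  have "Gg k n = (\<Sum>j = 0..n. (-1)^(Suc j) * int j * int ((n-j) choose j) * int (catalan (k-j)))"
    unfolding Gg_def by (simp add: atMost_atLeast0)
  also have "\<dots> = (\<Sum>j = 1..n. (-1)^(Suc j) * int j * int ((n-j) choose j) * int (catalan (k-j)))"
    by (subst sum.atLeast_Suc_atMost) simp_all
  also have "\<dots> = (\<Sum>j = 1..n. (-1)^(j-1) * int j * int ((n - j) choose j) * int (catalan (k - j)))"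
  proof (intro sum.cong refl)
    fix j assume "j \<in> {1..n}"
    then obtain i where "j = Suc i" by (cases j) auto
    then show "(-1)^(Suc j) * int j * int ((n-j) choose j) * int (catalan (k-j)) =
      (-1)^(j-1) * int j * int ((n - j) choose j) * int (catalan (k - j))" by simp
  qed
  finally show ?thesis by simp
qed



definition gS :: "nat \<Rightarrow> nat set \<Rightarrow> nat list" where
  "gS m S = sorted_list_of_set S @ sorted_list_of_set ({1..m} - S)"

lemma oi_iff: "order_iso \<tau> (id_perm k) \<longleftrightarrow> length \<tau> = k \<and> sorted_wrt (<) \<tau>"
proof
  assume h: "order_iso \<tau> (id_perm k)"
  then have len: "length \<tau> = k" unfolding order_iso_def id_perm_def by simp
  have "\<forall>i j. i < j \<longrightarrow> j < length \<tau> \<longrightarrow> \<tau> ! i < \<tau> ! j"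
  proof (intro allI impI)
    fix i j assume "i < j" "j < length \<tau>"
    then have "(\<tau>!i < \<tau>!j) = ([1..<k+1] ! i < [1..<k+1] ! j)" using h len unfolding order_iso_def id_perm_def
      by auto
    moreover have "[1..<k+1] ! i = Suc i" "[1..<k+1] ! j = Suc j" using \<open>i < j\<close> \<open>j < length \<tau>\<close> len
      by (subst nth_upt; simp)+
    ultimately show "\<tau> ! i < \<tau> ! j" using \<open>i < j\<close> by simp
  qed
  then show "length \<tau> = k \<and> sorted_wrt (<) \<tau>" using len by (simp add: sorted_wrt_iff_nth_less)
next
  assume h: "length \<tau> = k \<and> sorted_wrt (<) \<tau>"
  show "order_iso \<tau> (id_perm k)" unfolding order_iso_def id_perm_def
  proof (intro conjI allI impI)
    show "length \<tau> = length [1..<k + 1]" using h by simp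
  next
    fix i j assume i: "i < length \<tau>" and j: "j < length \<tau>"
    have "\<tau> ! i < \<tau> ! j \<longleftrightarrow> i < j"
    proof (cases "i < j")
      case True then show ?thesis using h j sorted_wrt_nth_less[of "(<)" \<tau> i j] by simp
    next
      case False
      then have "j < i \<or> j = i" by auto
      then show ?thesis
      proof
        assume "j < i" then show ?thesis using h i sorted_wrt_nth_less[of "(<)" \<tau> j i] by auto
      qed simp
    qed
    moreover have "[1..<k+1] ! i = Suc i" "[1..<k+1] ! j = Suc j" using i j h
      by (subst nth_upt; simp)+
    ultimately show "(\<tau> ! i < \<tau> ! j) = ([1..<k + 1] ! i < [1..<k + 1] ! j)"
      by simp
  qed
qed

lemma contains_iff: "contains_pattern \<sigma> (id_perm k) \<longleftrightarrow> (\<exists>\<tau>. subseq \<tau> \<sigma> \<and> length \<tau> = k \<and> sorted_wrt (<) \<tau>)"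
  unfolding contains_pattern_def oi_iff by blast

lemma gS_contains:
  assumes S: "S \<subseteq> {1..m}" and t: "t \<le> m" and big: "k \<le> card {x\<in>S. x \<le> t} + card ({t<..m} - S)"
  shows "contains_pattern (gS m S) (id_perm k)"
proof -
  define xs where "xs = sorted_list_of_set S"
  define ys where "ys = sorted_list_of_set ({1..m} - S)"
  have finS: "finite S" using S finite_subset by blast
  have sx: "sorted_wrt (<) xs" "set xs = S" "distinct xs" unfolding xs_def using finS by auto
  have sy: "sorted_wrt (<) ys" "set ys = {1..m} - S" "distinct ys" unfolding ys_def by auto
  define \<tau>0 where "\<tau>0 = filter (\<lambda>x. x \<le> t) xs @ filter (\<lambda>x. t < x) ys"
  have sub: "subseq \<tau>0 (gS m S)" unfolding \<tau>0_def gS_def xs_def[symmetric] ys_def[symmetric]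
    by (rule list_emb_append_mono) simp_all
  have sor: "sorted_wrt (<) \<tau>0" unfolding \<tau>0_def sorted_wrt_append
    using sx sy by (auto intro: sorted_wrt_filter)
  have l1: "length (filter (\<lambda>x. x \<le> t) xs) = card {x\<in>S. x \<le> t}"
  proof -
    have "set (filter (\<lambda>x. x \<le> t) xs) = {x\<in>S. x \<le> t}" using sx by auto
    then show ?thesis using distinct_card[of "filter (\<lambda>x. x \<le> t) xs"] sx by simp
  qed
  have l2: "length (filter (\<lambda>x. t < x) ys) = card ({t<..m} - S)"
  proof -
    have "set (filter (\<lambda>x. t < x) ys) = {t<..m} - S" using sy by auto
    then show ?thesis using distinct_card[of "filter (\<lambda>x. t < x) ys"] sy by simp
  qed
  have len: "k \<le> length \<tau>0" unfolding \<tau>0_def using l1 l2 big by simp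
  have f1: "subseq (take k \<tau>0) (gS m S)"
    by (rule subseq_order.order_trans[OF prefix_imp_subseq[OF take_is_prefix] sub])
  have f2: "length (take k \<tau>0) = k" using len by simp
  have f3: "sorted_wrt (<) (take k \<tau>0)" using sor by (rule sorted_wrt_take)
  have "\<exists>\<tau>. subseq \<tau> (gS m S) \<and> length \<tau> = k \<and> sorted_wrt (<) \<tau>"
    by (rule exI[of _ "take k \<tau>0"]) (intro conjI f1 f2 f3)
  then show ?thesis unfolding contains_iff .
qed

lemma subseq_set: "subseq xs ys \<Longrightarrow> set xs \<subseteq> set ys"
  by (induction rule: list_emb.induct) auto

lemma gS_contains_imp:
  assumes S: "S \<subseteq> {1..m}" and c: "contains_pattern (gS m S) (id_perm k)"
  shows "\<exists>t\<le>m. k \<le> card {x\<in>S. x \<le> t} + card ({t<..m} - S)"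
proof -
  define xs where "xs = sorted_list_of_set S"
  define ys where "ys = sorted_list_of_set ({1..m} - S)"
  have finS: "finite S" using S finite_subset by blast
  have sx: "set xs = S" unfolding xs_def using finS by auto
  have sy: "set ys = {1..m} - S" unfolding ys_def by auto
  obtain \<tau> where \<tau>: "subseq \<tau> (xs @ ys)" "length \<tau> = k" "sorted_wrt (<) \<tau>"
    using c unfolding contains_iff gS_def xs_def ys_def by blast
  obtain \<tau>1 \<tau>2 where sp: "\<tau> = \<tau>1 @ \<tau>2" "subseq \<tau>1 xs" "subseq \<tau>2 ys"
    using \<tau>(1) by (rule subseq_appendE)
  have s1: "set \<tau>1 \<subseteq> S" using subseq_set[OF sp(2)] sx by simp
  have s2: "set \<tau>2 \<subseteq> {1..m} - S" using subseq_set[OF sp(3)] sy by simp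
  have sor: "sorted_wrt (<) \<tau>1" "sorted_wrt (<) \<tau>2" "\<forall>x\<in>set \<tau>1. \<forall>y\<in>set \<tau>2. x < y"
    using \<tau>(3) unfolding sp(1) sorted_wrt_append by auto
  have dis: "distinct \<tau>1" "distinct \<tau>2" using sor strict_sorted_iff by auto
  define t where "t = (if \<tau>1 = [] then 0 else Max (set \<tau>1))"
  have tm: "t \<le> m"
  proof (cases "\<tau>1 = []")
    case False
    then have "Max (set \<tau>1) \<in> set \<tau>1" by simp
    then show ?thesis unfolding t_def using False s1 S by auto
  qed (simp add: t_def)
  have A: "set \<tau>1 \<subseteq> {x\<in>S. x \<le> t}"
  proof
    fix x assume "x \<in> set \<tau>1"
    then show "x \<in> {x\<in>S. x \<le> t}" using s1 unfolding t_def by auto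
  qed
  have B: "set \<tau>2 \<subseteq> {t<..m} - S"
  proof
    fix y assume y: "y \<in> set \<tau>2"
    have "t < y"
    proof (cases "\<tau>1 = []")
      case True then show ?thesis unfolding t_def using y s2 by auto
    next
      case False
      then have "Max (set \<tau>1) \<in> set \<tau>1" by simp
      then show ?thesis unfolding t_def using False sor(3) y by auto
    qed
    then show "y \<in> {t<..m} - S" using y s2 by auto
  qed
  have "length \<tau>1 \<le> card {x\<in>S. x \<le> t}"
    using card_mono[OF _ A] distinct_card[OF dis(1)] finS by simp
  moreover have "length \<tau>2 \<le> card ({t<..m} - S)"
    using card_mono[OF _ B] distinct_card[OF dis(2)] by simp
  ultimately show ?thesis using tm \<tau>(2) sp(1) by (intro exI[of _ t]) auto
qed

lemma avoids_iff:
  assumes S: "S \<subseteq> {1..m}" and k: "1 \<le> k"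
  shows "avoids (gS m S) (id_perm k) \<longleftrightarrow> condK m (k-1) S"
proof
  assume a: "avoids (gS m S) (id_perm k)"
  show "condK m (k-1) S" unfolding condK_def
  proof (intro allI impI)
    fix t assume t: "t \<le> m"
    show "card {x \<in> S. x \<le> t} + card ({t<..m} - S) \<le> k - 1"
    proof (rule ccontr)
      assume "\<not> ?thesis"
      then have "k \<le> card {x \<in> S. x \<le> t} + card ({t<..m} - S)" by simp
      then have "contains_pattern (gS m S) (id_perm k)" using gS_contains[OF S t] by simp
      then show False using a unfolding avoids_def by simp
    qed
  qed
next
  assume c: "condK m (k-1) S"
  show "avoids (gS m S) (id_perm k)" unfolding avoids_def
  proof
    assume "contains_pattern (gS m S) (id_perm k)"
    then obtain t where "t \<le> m" "k \<le> card {x\<in>S. x \<le> t} + card ({t<..m} - S)"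
      using gS_contains_imp[OF S] by blast
    moreover have "card {x\<in>S. x \<le> t} + card ({t<..m} - S) \<le> k - 1"
      using c \<open>t \<le> m\<close> unfolding condK_def by blast
    ultimately show False using k by linarith
  qed
qed



lemma gS_perm: assumes S: "S \<subseteq> {1..m}" shows "gS m S \<in> permutations_of_set {1..m}"
proof -
  have finS: "finite S" using S finite_subset by blast
  show ?thesis unfolding gS_def
    by (rule permutations_of_setI) (use finS S in auto)
qed

lemma gS_desc_sub: assumes S: "S \<subseteq> {1..m}" shows "descents (gS m S) \<subseteq> {card S - 1}"
proof
  fix i assume i: "i \<in> descents (gS m S)"
  define xs where "xs = sorted_list_of_set S"
  define ys where "ys = sorted_list_of_set ({1..m} - S)"
  have finS: "finite S" using S finite_subset by blast
  have sx: "sorted_wrt (<) xs" "length xs = card S" unfolding xs_def using finS by auto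
  have sy: "sorted_wrt (<) ys" unfolding ys_def by auto
  have d: "Suc i < length (xs @ ys)" "(xs @ ys) ! i > (xs @ ys) ! Suc i"
    using i unfolding descents_def gS_def xs_def ys_def by auto
  have "i = length xs - 1"
  proof (rule ccontr)
    assume ne: "i \<noteq> length xs - 1"
    show False
    proof (cases "Suc i < length xs")
      case True
      then have "(xs @ ys) ! i = xs ! i" "(xs @ ys) ! Suc i = xs ! Suc i" by (auto simp: nth_append)
      moreover have "xs ! i < xs ! Suc i" using sorted_wrt_nth_less[OF sx(1), of i "Suc i"] True by simp
      ultimately show False using d by simp
    next
      case False
      then have ge: "length xs \<le> i" using ne by auto
      then have "(xs @ ys) ! i = ys ! (i - length xs)" "(xs @ ys) ! Suc i = ys ! Suc (i - length xs)"
        by (auto simp: nth_append Suc_diff_le)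
      moreover have "ys ! (i - length xs) < ys ! Suc (i - length xs)"
        using sorted_wrt_nth_less[OF sy, of "i - length xs" "Suc (i - length xs)"] d(1) ge by simp
      ultimately show False using d by simp
    qed
  qed
  then show "i \<in> {card S - 1}" using sx by simp
qed

lemma gS_grass: assumes S: "S \<subseteq> {1..m}" shows "grassmannian (gS m S)"
proof -
  have "card (descents (gS m S)) \<le> card {card S - 1}"
    by (rule card_mono) (use gS_desc_sub[OF S] in auto)
  then show ?thesis unfolding grassmannian_def by simp
qed

lemma nonDown:
  assumes S: "S \<subseteq> {1..m}" and c: "condK m K S" and K: "K < m"
  shows "\<exists>a\<in>S. \<exists>b\<in>{1..m} - S. b < a"
proof (rule ccontr)
  assume h: "\<not> ?thesis"
  have finS: "finite S" using S finite_subset by blast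
  define t where "t = (if S = {} then 0 else Max S)"
  have tm: "t \<le> m" unfolding t_def using S finS by (auto intro: order.trans[OF _ Max_le_iff[THEN iffD2]])
  have e1: "{x\<in>S. x \<le> t} = S" unfolding t_def using finS by auto
  have e2: "{t<..m} - S = {1..m} - S"
  proof (intro equalityI subsetI)
    fix b assume "b \<in> {t<..m} - S" then show "b \<in> {1..m} - S" by auto
  next
    fix b assume b: "b \<in> {1..m} - S"
    have "t < b"
    proof (cases "S = {}")
      case True then show ?thesis unfolding t_def using b by auto
    next
      case False
      then have "Max S \<in> S" using finS by simp
      moreover have "\<not> b < Max S" using h b \<open>Max S \<in> S\<close> by blast
      moreover have "b \<noteq> Max S" using b \<open>Max S \<in> S\<close> by auto
      ultimately show ?thesis unfolding t_def using False by simp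
    qed
    then show "b \<in> {t<..m} - S" using b by auto
  qed
  have "card S + card ({1..m} - S) = m"
    using card_Diff_subset[OF finS S] card_mono[OF _ S] by simp
  then have "m \<le> K" using c[unfolded condK_def, rule_format, OF tm] e1 e2 by simp
  then show False using K by simp
qed

lemma gS_desc_in:
  assumes S: "S \<subseteq> {1..m}" and c: "condK m K S" and K: "K < m"
  shows "card S - 1 \<in> descents (gS m S)" "1 \<le> card S"
proof -
  obtain a b where ab: "a \<in> S" "b \<in> {1..m} - S" "b < a" using nonDown[OF S c K] by blast
  define xs where "xs = sorted_list_of_set S"
  define ys where "ys = sorted_list_of_set ({1..m} - S)"
  have finS: "finite S" using S finite_subset by blast
  have sx: "sorted xs" "length xs = card S" "set xs = S" unfolding xs_def using finS by auto
  have sy: "sorted ys" "set ys = {1..m} - S" unfolding ys_def by auto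
  have pos: "1 \<le> card S" using ab(1) finS card_0_eq[OF finS] by (cases "card S") auto
  show "1 \<le> card S" by (rule pos)
  obtain j where j: "j < length xs" "xs ! j = a" using ab(1) sx(3) by (metis in_set_conv_nth)
  obtain j' where j': "j' < length ys" "ys ! j' = b" using ab(2) sy(2) by (metis in_set_conv_nth)
  have "a \<le> xs ! (card S - 1)" using sorted_nth_mono[OF sx(1), of j "card S - 1"] j sx(2) by simp
  moreover have "ys ! 0 \<le> b" using sorted_nth_mono[OF sy(1), of 0 j'] j' by simp
  moreover have "(xs @ ys) ! (card S - 1) = xs ! (card S - 1)" using pos sx(2) by (simp add: nth_append)
  moreover have "(xs @ ys) ! Suc (card S - 1) = ys ! 0" using pos sx(2) by (simp add: nth_append)
  moreover have "Suc (card S - 1) < length (xs @ ys)" using pos sx(2) j'(1) by auto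
  ultimately show "card S - 1 \<in> descents (gS m S)"
    unfolding descents_def gS_def xs_def[symmetric] ys_def[symmetric] using ab(3) by simp
qed

lemma gS_desc_eq:
  assumes S: "S \<subseteq> {1..m}" and c: "condK m K S" and K: "K < m"
  shows "descents (gS m S) = {card S - 1}"
  using gS_desc_sub[OF S] gS_desc_in[OF S c K] by auto

lemma gS_inj: assumes K: "K < m" shows "inj_on (gS m) {S. S \<subseteq> {1..m} \<and> condK m K S}"
proof (rule inj_onI)
  fix S T assume S: "S \<in> {S. S \<subseteq> {1..m} \<and> condK m K S}" and T: "T \<in> {S. S \<subseteq> {1..m} \<and> condK m K S}"
    and eq: "gS m S = gS m T"
  have "{card S - 1} = {card T - 1}" using gS_desc_eq[of S m K] gS_desc_eq[of T m K] S T K eq by simp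
  moreover have "1 \<le> card S" "1 \<le> card T" using gS_desc_in(2)[of S m K] gS_desc_in(2)[of T m K] S T K by auto
  ultimately have cc: "card S = card T" by simp
  have finS: "finite S" "finite T" using S T finite_subset by auto
  have "take (card S) (gS m S) = sorted_list_of_set S" unfolding gS_def using finS by simp
  moreover have "take (card T) (gS m T) = sorted_list_of_set T" unfolding gS_def using finS by simp
  ultimately have "sorted_list_of_set S = sorted_list_of_set T" using eq cc by simp
  then show "S = T" using finS by (metis sorted_list_of_set.set_sorted_key_list_of_set)
qed

lemma strict_from_nodesc:
  assumes "distinct xs" "\<And>i. Suc i < length xs \<Longrightarrow> \<not> xs ! i > xs ! Suc i"
  shows "sorted_wrt (<) (xs :: nat list)"
proof -
  have tr: "transp ((<) :: nat \<Rightarrow> nat \<Rightarrow> bool)" by (auto simp: transp_def)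
  show ?thesis unfolding sorted_wrt_iff_nth_Suc_transp[OF tr]
  proof (intro allI impI)
    fix i assume i: "Suc i < length xs"
    have "xs ! i \<noteq> xs ! Suc i" using nth_eq_iff_index_eq[OF assms(1), of i "Suc i"] i by simp
    then show "xs ! i < xs ! Suc i" using assms(2)[OF i] by simp
  qed
qed

lemma gS_surj:
  assumes \<sigma>: "\<sigma> \<in> permutations_of_set {1..m}" and g: "grassmannian \<sigma>" and a: "avoids \<sigma> (id_perm k)"
    and k: "1 \<le> k" "k \<le> m"
  shows "\<exists>S. S \<subseteq> {1..m} \<and> condK m (k-1) S \<and> \<sigma> = gS m S"
proof -
  have set\<sigma>: "set \<sigma> = {1..m}" and dis: "distinct \<sigma>" using permutations_of_setD[OF \<sigma>] by auto
  have len: "length \<sigma> = m" using distinct_card[OF dis] set\<sigma> by simp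
  have fd: "finite (descents \<sigma>)" unfolding descents_def by (rule finite_subset[of _ "{..<length \<sigma>}"]) auto
  have "descents \<sigma> \<noteq> {}"
  proof
    assume e: "descents \<sigma> = {}"
    have "sorted_wrt (<) \<sigma>"
      by (rule strict_from_nodesc[OF dis]) (use e in \<open>auto simp: descents_def\<close>)
    then have "subseq (take k \<sigma>) \<sigma> \<and> length (take k \<sigma>) = k \<and> sorted_wrt (<) (take k \<sigma>)"
      using len k by (auto intro: sorted_wrt_take prefix_imp_subseq take_is_prefix)
    then have "contains_pattern \<sigma> (id_perm k)" unfolding contains_iff by blast
    then show False using a unfolding avoids_def by simp
  qed
  then have "card (descents \<sigma>) = 1" using g fd unfolding grassmannian_def
    by (metis card_0_eq le_antisym less_one not_le)
  then obtain d where dd: "descents \<sigma> = {d}" by (rule card_1_singletonE)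
  have dlen: "Suc d < length \<sigma>" using dd unfolding descents_def by auto
  define xs where "xs = take (Suc d) \<sigma>"
  define ys where "ys = drop (Suc d) \<sigma>"
  have app: "\<sigma> = xs @ ys" unfolding xs_def ys_def by simp
  have dx: "distinct xs" "distinct ys" using dis app by (metis distinct_append)+
  have sx: "sorted_wrt (<) xs"
  proof (rule strict_from_nodesc[OF dx(1)])
    fix i assume i: "Suc i < length xs"
    then have "i \<noteq> d" "Suc i < length \<sigma>" unfolding xs_def by auto
    then have "i \<notin> descents \<sigma>" using dd by auto
    then show "\<not> xs ! i > xs ! Suc i" using i \<open>Suc i < length \<sigma>\<close> unfolding descents_def xs_def by auto
  qed
  have sy: "sorted_wrt (<) ys"
  proof (rule strict_from_nodesc[OF dx(2)])
    fix i assume i: "Suc i < length ys"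
    then have "Suc d + i \<noteq> d" "Suc (Suc d + i) < length \<sigma>" unfolding ys_def by auto
    then have "Suc d + i \<notin> descents \<sigma>" using dd by auto
    then show "\<not> ys ! i > ys ! Suc i" using i \<open>Suc (Suc d + i) < length \<sigma>\<close> unfolding descents_def ys_def by auto
  qed
  define S where "S = set xs"
  have Sm: "S \<subseteq> {1..m}" unfolding S_def xs_def using set\<sigma> by (metis set_take_subset)
  have disj: "set xs \<inter> set ys = {}" using dis app by auto
  have un: "set xs \<union> set ys = {1..m}" using set\<sigma> app by auto
  have ysS: "set ys = {1..m} - S" unfolding S_def using disj un by auto
  have ex: "sorted_list_of_set S = xs"
    unfolding S_def by (rule sorted_distinct_set_unique) (use sx dx in \<open>auto simp: strict_sorted_iff\<close>)
  have ey: "sorted_list_of_set ({1..m} - S) = ys"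
    unfolding ysS[symmetric] by (rule sorted_distinct_set_unique) (use sy dx in \<open>auto simp: strict_sorted_iff\<close>)
  have eq: "\<sigma> = gS m S" unfolding gS_def ex ey app ..
  have "condK m (k-1) S" using a avoids_iff[OF Sm k(1)] eq by simp
  then show ?thesis using Sm eq by blast
qed



theorem theorem3p1:
  fixes k m :: nat
  assumes "k \<ge> 2" and "k \<le> m" and "m \<le> 2*k - 2"
  shows "int (card {\<sigma> \<in> permutations_of_set {1..m}. grassmannian \<sigma> \<and> avoids \<sigma> (id_perm k)})
    = (\<Sum>j = 1..2*k - m. (-1)^(j-1) * int j * int ((2*k - m - j) choose j) * int (catalan (k - j)))"
proof -
  define Fam where "Fam = {S. S \<subseteq> {1..m} \<and> condK m (k-1) S}"
  define n where "n = 2*k - m"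
  have n2: "2 \<le> n" "n \<le> k" "m = 2*k - n" using assms unfolding n_def by auto
  have K: "k - 1 < m" using assms by simp
  have img: "gS m ` Fam = {\<sigma> \<in> permutations_of_set {1..m}. grassmannian \<sigma> \<and> avoids \<sigma> (id_perm k)}"
  proof (intro equalityI subsetI)
    fix \<sigma> assume "\<sigma> \<in> gS m ` Fam"
    then obtain S where S: "S \<subseteq> {1..m}" "condK m (k-1) S" "\<sigma> = gS m S" unfolding Fam_def by blast
    have "avoids \<sigma> (id_perm k)" using avoids_iff[OF S(1), of k] S assms by simp
    then show "\<sigma> \<in> {\<sigma> \<in> permutations_of_set {1..m}. grassmannian \<sigma> \<and> avoids \<sigma> (id_perm k)}"
      using gS_perm[OF S(1)] gS_grass[OF S(1)] S(3) by simp
  next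
    fix \<sigma> assume "\<sigma> \<in> {\<sigma> \<in> permutations_of_set {1..m}. grassmannian \<sigma> \<and> avoids \<sigma> (id_perm k)}"
    then have h: "\<sigma> \<in> permutations_of_set {1..m}" "grassmannian \<sigma>" "avoids \<sigma> (id_perm k)" by auto
    obtain S where "S \<subseteq> {1..m}" "condK m (k-1) S" "\<sigma> = gS m S"
      using gS_surj[OF h] assms by auto
    then show "\<sigma> \<in> gS m ` Fam" unfolding Fam_def by blast
  qed
  have "card {\<sigma> \<in> permutations_of_set {1..m}. grassmannian \<sigma> \<and> avoids \<sigma> (id_perm k)} = card Fam"
    unfolding img[symmetric] Fam_def by (rule card_image[OF gS_inj[OF K]])
  also have "card Fam = (\<Sum>a\<le>m. Dy m (k-1) a)" unfolding Fam_def by (rule count_sum)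
  finally have "int (card {\<sigma> \<in> permutations_of_set {1..m}. grassmannian \<sigma> \<and> avoids \<sigma> (id_perm k)})
     = (\<Sum>a\<le>m. phi m (k-1) a)" by (simp add: Dy_closed)
  also have "\<dots> = Ll k n" by (rule sum_phi[OF n2])
  also have "\<dots> = Gg k n" using Gg_closed[of n k] n2 by simp
  also have "\<dots> = (\<Sum>j = 1..n. (-1)^(j-1) * int j * int ((n - j) choose j) * int (catalan (k - j)))"
    by (rule rhs_eq[symmetric])
  finally show ?thesis unfolding n_def .
qed


end
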